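(* For every fixed $t>0$, assume the symmetric kernel $k_t$ satisfies $\int\int k_t(y,x)^2\,p_H(y)\,p_H(x)\,dy\,dx=c_t^2<+\infty$, and let $K_t:\mathbb{H}\to\mathbb{H}$ be the continuous linear operator defined by $\langle K_tu,v\rangle_{\mathbb{H}}=\int_{\mathbb{R}^\nu}\int_{\mathbb{R}^\nu}k_t(y,x)\,u(x)\,v(y)\,p_H(y)\,p_H(x)\,dy\,dx$ for all $u,v\in\mathbb{H}$. Then: (a) for all $u,v\in\mathbb{H}$, $\langle K_tu,v\rangle_{\mathbb{H}}=\sum_{\alpha\in\mathbb{N}}b_\alpha(t)\langle u,\psi_\alpha\rangle_{\mathbb{H}}\langle v,\psi_\alpha\rangle_{\mathbb{H}}$, $K_t$ is a positive symmetric operator on $\mathbb{H}$, and $K_tu=\sum_{\alpha}b_\alpha(t)\langle u,\psi_\alpha\rangle_{\mathbb{H}}\psi_\alpha$; (b) for all $\alpha\in\mathbb{N}$, $\psi_\alpha\in\mathbb{H}$ is an eigenfunction, independent of $t$, of $K_t$ for the positive eigenvalue $b_\alpha(t)=\exp(-\lambda_\alpha t)$: $K_t\psi_\alpha=b_\alpha(t)\psi_\alpha$, where $1=b_0(t)>b_1(t)\ge b_2(t)\ge\cdots$; consequently $\langle K_t\psi_\alpha,\psi_\beta\rangle_{\mathbb{H}}=b_\alpha(t)\delta_{\alpha\beta}$ for all $\alpha,\beta$; (c) for all $u\in\mathbb{H}$, $\|K_tu\|_{\mathbb{H}}^2=\sum_\alpha b_\alpha(t)^2\langle u,\psi_\alpha\rangle_{\mathbb{H}}^2$,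 and $\sum_{\alpha\in\mathbb{N}}\|K_t\psi_\alpha\|_{\mathbb{H}}^2=c_t^2=\sum_\alpha b_\alpha(t)^2<+\infty$; therefore $K_t$ is a Hilbert–Schmidt operator on $\mathbb{H}$.
   Context: Let $\nu\ge1$, $n_d>1$, and $\eta^1,\dots,\eta^{n_d}\in\mathbb{R}^\nu$ with $\frac1{n_d}\sum_j\eta^j=0$, $\frac1{n_d-1}\sum_j\eta^j(\eta^j)^T=I_\nu$. Put $s=\big(\frac{4}{n_d(2+\nu)}\big)^{1/(\nu+4)}$, $\hat s=s/\sqrt{s^2+(n_d-1)/n_d}$, $p_H(\eta)=\frac1{n_d}\sum_{j}(\sqrt{2\pi}\,\hat s)^{-\nu}\exp(-\frac{1}{2\hat s^2}\|\eta-\frac{\hat s}{s}\eta^j\|^2)$ (strictly positive, continuous) and $\Phi=-\log\big((\sqrt{2\pi}\hat s)^{\nu}p_H\big)$. Let $\mathbb{H}=L^2(\mathbb{R}^\nu;p_H)$ with $\langle u,v\rangle_{\mathbb{H}}=\int uv\,p_H\,dy$. Let $\hat L(q)=\mathcal{V}q-\frac12\nabla^2q$ with $\mathcal{V}=\frac18\|\nabla\Phi\|^2-\frac14\nabla^2\Phi$, with condition at infinity $\lim_{\|y\|\to\infty}p_H^{1/2}\|\nabla(p_H^{-1/2}q)\|=0$. Standing hypotheses: $\hat L$ has countable spectrum $0=\lambda_0<\lambda_1\le\lambda_2\le\cdots$ with finite multiplicities, and its eigenfunctions $\{q_\alpha\}$ form an orthonormal Hilbert basis of $L^2(\mathbb{R}^\nu)$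 with $q_0=p_H^{1/2}$. Put $\psi_\alpha=q_\alpha p_H^{-1/2}$ (an orthonormal Hilbert basis of $\mathbb{H}$ with $\psi_0\equiv1$). Let $\rho(y,t\,|\,x,0)$ be the transition density of the Itô SDE $dY=-\frac12\nabla\Phi(Y)\,dt+dW$ ($W$ a standard $\nu$-dimensional Wiener process) from $Y(0)=x$, assumed to admit for $t>0$ the representation $\rho(y,t\,|\,x,0)=p_H(y)^{1/2}p_H(x)^{-1/2}\sum_{\alpha}e^{-\lambda_\alpha t}q_\alpha(y)q_\alpha(x)$. Define $k_t(y,x)=\rho(y,t\,|\,x,0)/p_H(y)$ (symmetric in $(y,x)$) and $b_\alpha(t)=e^{-\lambda_\alpha t}$. *)

theory Defs
  imports "HOL-Analysis.Analysis"
begin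

text \<open>Data points are indexed by j < nd (i.e. eta^{j+1} of the paper is eta j).
  The dimension nu is CARD('n).\<close>

definition bw_s :: "nat \<Rightarrow> nat \<Rightarrow> real" where
  "bw_s nu nd = (4 / (real nd * (2 + real nu))) powr (1 / (real nu + 4))"

definition bw_hat_s :: "nat \<Rightarrow> nat \<Rightarrow> real" where
  "bw_hat_s nu nd = bw_s nu nd / sqrt ((bw_s nu nd)\<^sup>2 + (real nd - 1) / real nd)"

definition pH :: "nat \<Rightarrow> (nat \<Rightarrow> real ^ 'n) \<Rightarrow> real ^ 'n \<Rightarrow> real" where
  "pH nd eta y =
     (let nu = CARD('n); s = bw_s nu nd; sh = bw_hat_s nu nd in
      (1 / real nd) * (\<Sum>j<nd. (sqrt (2 * pi) * sh) powi (- int nu) *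
         exp (- (1 / (2 * sh\<^sup>2)) * (norm (y - (sh / s) *\<^sub>R eta j))\<^sup>2)))"

definition Phi :: "nat \<Rightarrow> (nat \<Rightarrow> real ^ 'n) \<Rightarrow> real ^ 'n \<Rightarrow> real" where
  "Phi nd eta y = - ln ((sqrt (2 * pi) * bw_hat_s CARD('n) nd) ^ CARD('n) * pH nd eta y)"

definition pderiv_dir :: "('a::euclidean_space \<Rightarrow> real) \<Rightarrow> 'a \<Rightarrow> 'a \<Rightarrow> real" where
  "pderiv_dir f y i = deriv (\<lambda>r. f (y + r *\<^sub>R i)) 0"

definition grad_norm :: "('a::euclidean_space \<Rightarrow> real) \<Rightarrow> 'a \<Rightarrow> real" where
  "grad_norm f y = sqrt (\<Sum>i\<in>Basis. (pderiv_dir f y i)\<^sup>2)"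

definition laplacian :: "('a::euclidean_space \<Rightarrow> real) \<Rightarrow> 'a \<Rightarrow> real" where
  "laplacian f y = (\<Sum>i\<in>Basis. deriv (\<lambda>r. pderiv_dir f (y + r *\<^sub>R i) i) 0)"

definition twice_part_diff :: "('a::euclidean_space \<Rightarrow> real) \<Rightarrow> bool" where
  "twice_part_diff f \<longleftrightarrow>
     (\<forall>y. \<forall>i\<in>Basis. (\<lambda>r. f (y + r *\<^sub>R i)) differentiable (at 0)
        \<and> (\<lambda>r. pderiv_dir f (y + r *\<^sub>R i) i) differentiable (at 0))"

definition potV :: "nat \<Rightarrow> (nat \<Rightarrow> real ^ 'n) \<Rightarrow> real ^ 'n \<Rightarrow> real" where
  "potV nd eta y = 1/8 * (grad_norm (Phi nd eta) y)\<^sup>2 - 1/4 * laplacian (Phi nd eta) y"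

definition Lhat :: "nat \<Rightarrow> (nat \<Rightarrow> real ^ 'n) \<Rightarrow> (real ^ 'n \<Rightarrow> real) \<Rightarrow> real ^ 'n \<Rightarrow> real" where
  "Lhat nd eta q y = potV nd eta y * q y - 1/2 * laplacian q y"

section \<open>The weighted L^2 space H = L^2(R^nu; p_H) (realised on functions, equality a.e.)\<close>

definition muH :: "nat \<Rightarrow> (nat \<Rightarrow> real ^ 'n) \<Rightarrow> (real ^ 'n) measure" where
  "muH nd eta = density lborel (\<lambda>y. ennreal (pH nd eta y))"

definition inL2 :: "'a measure \<Rightarrow> ('a \<Rightarrow> real) \<Rightarrow> bool" where
  "inL2 M u \<longleftrightarrow> u \<in> borel_measurable M \<and> integrable M (\<lambda>x. (u x)\<^sup>2)"

definition ipL2 :: "'a measure \<Rightarrow> ('a \<Rightarrow> real) \<Rightarrow> ('a \<Rightarrow> real) \<Rightarrow> real" where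
  "ipL2 M u v = (\<integral>x. u x * v x \<partial>M)"

definition normL2 :: "'a measure \<Rightarrow> ('a \<Rightarrow> real) \<Rightarrow> real" where
  "normL2 M u = sqrt (ipL2 M u u)"

definition hilbert_basis :: "'a measure \<Rightarrow> (nat \<Rightarrow> 'a \<Rightarrow> real) \<Rightarrow> bool" where
  "hilbert_basis M e \<longleftrightarrow>
     (\<forall>a. inL2 M (e a)) \<and>
     (\<forall>a b. ipL2 M (e a) (e b) = (if a = b then 1 else 0)) \<and>
     (\<forall>u. inL2 M u \<longrightarrow>
        (\<lambda>N. normL2 M (\<lambda>x. u x - (\<Sum>a<N. ipL2 M u (e a) * e a x))) \<longlonglongrightarrow> 0)"

definition hilbert_schmidt :: "'a measure \<Rightarrow> (('a \<Rightarrow> real) \<Rightarrow> ('a \<Rightarrow> real)) \<Rightarrow> bool" where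
  "hilbert_schmidt M K \<longleftrightarrow>
     (\<forall>u. inL2 M u \<longrightarrow> inL2 M (K u)) \<and>
     (\<exists>e. hilbert_basis M e \<and> summable (\<lambda>a. (normL2 M (K (e a)))\<^sup>2))"

end

theory Submission
  imports Defs
begin


lemma abs_prod_le: "\<bar>(a::real) * b\<bar> \<le> a\<^sup>2 + b\<^sup>2"
proof -
  have "2 * \<bar>a\<bar> * \<bar>b\<bar> \<le> \<bar>a\<bar>\<^sup>2 + \<bar>b\<bar>\<^sup>2" by (rule sum_squares_bound)
  moreover have "\<bar>a\<bar> * \<bar>b\<bar> \<ge> 0" by simp
  moreover have "\<bar>a\<bar>\<^sup>2 = a\<^sup>2" "\<bar>b\<bar>\<^sup>2 = b\<^sup>2" by simp_all
  ultimately show ?thesis unfolding abs_mult by linarith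
qed

lemma inL2_mult_int:
  assumes "inL2 M f" "inL2 M g"
  shows "integrable M (\<lambda>x. f x * g x)"
proof -
  have [measurable]: "f \<in> borel_measurable M" "g \<in> borel_measurable M"
    using assms unfolding inL2_def by auto
  have I: "integrable M (\<lambda>x. (f x)\<^sup>2 + (g x)\<^sup>2)"
    using assms unfolding inL2_def by auto
  have B: "AE x in M. norm (f x * g x) \<le> norm ((f x)\<^sup>2 + (g x)\<^sup>2)"
  proof (intro AE_I2)
    fix x
    have "\<bar>f x * g x\<bar> \<le> (f x)\<^sup>2 + (g x)\<^sup>2"
      by (rule abs_prod_le)
    then show "norm (f x * g x) \<le> norm ((f x)\<^sup>2 + (g x)\<^sup>2)" by simp
  qed
  show ?thesis by (rule Bochner_Integration.integrable_bound[OF I _ B]) measurable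
qed

lemma inL2_lin:
  assumes "inL2 M f" "inL2 M g"
  shows "inL2 M (\<lambda>x. r * f x + s * g x)"
proof -
  have [measurable]: "f \<in> borel_measurable M" "g \<in> borel_measurable M"
    using assms unfolding inL2_def by auto
  have i1: "integrable M (\<lambda>x. (f x)\<^sup>2)" "integrable M (\<lambda>x. (g x)\<^sup>2)"
    using assms unfolding inL2_def by auto
  have i2: "integrable M (\<lambda>x. f x * g x)" using inL2_mult_int[OF assms] .
  have "integrable M (\<lambda>x. r\<^sup>2 * (f x)\<^sup>2 + (2 * r * s) * (f x * g x) + (s\<^sup>2) * (g x)\<^sup>2)"
    using i1 i2 by auto
  moreover have "(\<lambda>x. r\<^sup>2 * (f x)\<^sup>2 + (2 * r * s) * (f x * g x) + (s\<^sup>2) * (g x)\<^sup>2) = (\<lambda>x. (r * f x + s * g x)\<^sup>2)"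
    by (auto simp: power2_eq_square algebra_simps)
  ultimately show ?thesis unfolding inL2_def by auto
qed

lemma inL2_diff: "inL2 M f \<Longrightarrow> inL2 M g \<Longrightarrow> inL2 M (\<lambda>x. f x - g x)"
  using inL2_lin[of M f g 1 "-1"] by simp

lemma inL2_scale: "inL2 M f \<Longrightarrow> inL2 M (\<lambda>x. r * f x)"
  using inL2_lin[of M f f r 0] by simp

lemma inL2_zero: "inL2 M (\<lambda>x. 0)"
  unfolding inL2_def by auto

lemma inL2_sum:
  assumes "finite A" "\<forall>a\<in>A. inL2 M (e a)"
  shows "inL2 M (\<lambda>x. \<Sum>a\<in>A. d a * e a x)"
  using assms
proof (induction A rule: finite_induct)
  case empty then show ?case by (simp add: inL2_zero)
next
  case (insert a A)
  then have "inL2 M (\<lambda>x. d a * e a x + 1 * (\<Sum>a\<in>A. d a * e a x))"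
    by (intro inL2_lin) auto
  with insert show ?case by simp
qed

lemma ip_comm: "ipL2 M f g = ipL2 M g f"
  unfolding ipL2_def by (simp add: mult.commute)

lemma ip_lin:
  assumes "inL2 M f" "inL2 M g" "inL2 M w"
  shows "ipL2 M (\<lambda>x. r * f x + s * g x) w = r * ipL2 M f w + s * ipL2 M g w"
proof -
  have i: "integrable M (\<lambda>x. f x * w x)" "integrable M (\<lambda>x. g x * w x)"
    using inL2_mult_int assms by auto
  have "ipL2 M (\<lambda>x. r * f x + s * g x) w = (\<integral>x. r * (f x * w x) + s * (g x * w x) \<partial>M)"
    unfolding ipL2_def by (simp add: algebra_simps)
  also have "\<dots> = r * ipL2 M f w + s * ipL2 M g w"
    using i unfolding ipL2_def by simp
  finally show ?thesis .
qed

lemma ip_diff: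
  assumes "inL2 M f" "inL2 M g" "inL2 M w"
  shows "ipL2 M (\<lambda>x. f x - g x) w = ipL2 M f w - ipL2 M g w"
  using ip_lin[OF assms, of 1 "-1"] by simp

lemma ip_sum:
  assumes "finite A" "\<forall>a\<in>A. inL2 M (e a)" "inL2 M w"
  shows "ipL2 M (\<lambda>x. \<Sum>a\<in>A. d a * e a x) w = (\<Sum>a\<in>A. d a * ipL2 M (e a) w)"
  using assms
proof (induction A rule: finite_induct)
  case empty then show ?case by (simp add: ipL2_def)
next
  case (insert a A)
  have "ipL2 M (\<lambda>x. d a * e a x + 1 * (\<Sum>a\<in>A. d a * e a x)) w
      = d a * ipL2 M (e a) w + 1 * ipL2 M (\<lambda>x. \<Sum>a\<in>A. d a * e a x) w"
    using insert by (intro ip_lin inL2_sum) auto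
  with insert show ?case by simp
qed

lemma ip_self_nonneg: "ipL2 M f f \<ge> 0"
  unfolding ipL2_def by (rule integral_nonneg_AE) (simp add: zero_le_square)

lemma normL2_sq: "(normL2 M f)\<^sup>2 = ipL2 M f f"
  unfolding normL2_def using ip_self_nonneg by simp

lemma normL2_nonneg: "normL2 M f \<ge> 0"
  unfolding normL2_def using ip_self_nonneg by simp

lemma quad_disc:
  fixes A B C :: real
  assumes "\<forall>r. 0 \<le> A - 2*r*B + r\<^sup>2*C" "A \<ge> 0" "C \<ge> 0"
  shows "B\<^sup>2 \<le> A * C"
proof (cases "C = 0")
  case True
  show ?thesis
  proof (cases "B = 0")
    case True then show ?thesis using assms by simp
  next
    case False
    have "0 \<le> A - 2*((A+1)/(2*B))*B" using assms(1)[rule_format, of "(A+1)/(2*B)"] True by simp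
    also have "\<dots> = -1" using False by (simp add: field_simps)
    finally show ?thesis by simp
  qed
next
  case False
  have C: "C > 0" using False assms by simp
  have "0 \<le> A - 2*(B/C)*B + (B/C)\<^sup>2*C" using assms by blast
  also have "\<dots> = A - B\<^sup>2/C" using C by (simp add: power2_eq_square field_simps)
  finally show ?thesis using C by (simp add: field_simps)
qed

lemma ip_CS:
  assumes f: "inL2 M f" and g: "inL2 M g"
  shows "\<bar>ipL2 M f g\<bar> \<le> normL2 M f * normL2 M g"
proof -
  define A where "A = ipL2 M f f"
  define B where "B = ipL2 M f g"
  define C where "C = ipL2 M g g"
  have "0 \<le> A - 2*r*B + r\<^sup>2*C" for r
  proof -
    define h where "h = (\<lambda>x. 1 * f x + (-r) * g x)"
    have h: "inL2 M h" unfolding h_def by (intro inL2_lin f g)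
    have "ipL2 M h h = 1 * ipL2 M f h + (-r) * ipL2 M g h"
      unfolding h_def by (rule ip_lin[OF f g h[unfolded h_def]])
    also have "ipL2 M f h = ipL2 M h f" by (rule ip_comm)
    also have "\<dots> = 1 * ipL2 M f f + (-r) * ipL2 M g f"
      unfolding h_def by (rule ip_lin[OF f g f])
    also have "ipL2 M g h = ipL2 M h g" by (rule ip_comm)
    also have "\<dots> = 1 * ipL2 M f g + (-r) * ipL2 M g g"
      unfolding h_def by (rule ip_lin[OF f g g])
    finally have "ipL2 M h h = A - 2*r*B + r\<^sup>2*C"
      unfolding A_def B_def C_def using ip_comm[of M g f]
      by (simp add: power2_eq_square algebra_simps)
    then show ?thesis using ip_self_nonneg[of M h] by simp
  qed
  then have "B\<^sup>2 \<le> A * C"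
    by (intro quad_disc) (auto simp: A_def C_def ip_self_nonneg)
  then have "sqrt (B\<^sup>2) \<le> sqrt (A * C)" by (rule real_sqrt_le_mono)
  then show ?thesis
    unfolding normL2_def A_def B_def C_def by (simp add: real_sqrt_mult)
qed

lemma ip_tendsto:
  assumes g: "inL2 M g" and S: "\<And>N. inL2 M (S N)"
    and lim: "(\<lambda>N. normL2 M (\<lambda>x. g x - S N x)) \<longlonglongrightarrow> 0" and w: "inL2 M w"
  shows "(\<lambda>N. ipL2 M (S N) w) \<longlonglongrightarrow> ipL2 M g w"
proof -
  have "(\<lambda>N. ipL2 M (S N) w - ipL2 M g w) \<longlonglongrightarrow> 0"
  proof (rule Lim_null_comparison)
    show "\<forall>\<^sub>F N in sequentially. norm (ipL2 M (S N) w - ipL2 M g w) \<le> normL2 M (\<lambda>x. g x - S N x) * normL2 M w"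
    proof (intro always_eventually allI)
      fix N
      have "ipL2 M g w - ipL2 M (S N) w = ipL2 M (\<lambda>x. g x - S N x) w"
        by (rule ip_diff[symmetric]) (use g S w in auto)
      moreover have "norm (ipL2 M (S N) w - ipL2 M g w) = \<bar>ipL2 M g w - ipL2 M (S N) w\<bar>"
        by (simp add: abs_minus_commute)
      ultimately show "norm (ipL2 M (S N) w - ipL2 M g w) \<le> normL2 M (\<lambda>x. g x - S N x) * normL2 M w"
        using ip_CS[OF inL2_diff[OF g S] w] by simp
    qed
    show "(\<lambda>N. normL2 M (\<lambda>x. g x - S N x) * normL2 M w) \<longlonglongrightarrow> 0"
      using tendsto_mult_left_zero[OF lim] by simp
  qed
  then show ?thesis by (rule LIM_zero_cancel)
qed

lemma ip_orth_sum:
  assumes e: "\<And>a. inL2 M (e a)"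
    and orth: "\<And>a b. ipL2 M (e a) (e b) = (if a = b then 1 else 0)"
    and A: "finite A"
  shows "ipL2 M (\<lambda>x. \<Sum>a\<in>A. d a * e a x) (\<lambda>x. \<Sum>a\<in>A. d a * e a x) = (\<Sum>a\<in>A. (d a)\<^sup>2)"
proof -
  let ?T = "\<lambda>x. \<Sum>a\<in>A. d a * e a x"
  have T: "inL2 M ?T" using A e by (intro inL2_sum) auto
  have "ipL2 M ?T ?T = (\<Sum>a\<in>A. d a * ipL2 M (e a) ?T)"
    using A e T by (intro ip_sum) auto
  also have "\<dots> = (\<Sum>a\<in>A. d a * d a)"
  proof (rule sum.cong[OF refl])
    fix a assume aA: "a \<in> A"
    have "ipL2 M (e a) ?T = ipL2 M ?T (e a)" by (rule ip_comm)
    also have "\<dots> = (\<Sum>b\<in>A. d b * ipL2 M (e b) (e a))"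
      using A e by (intro ip_sum) auto
    also have "\<dots> = (\<Sum>b\<in>A. if b = a then d b else 0)"
      by (intro sum.cong) (auto simp: orth)
    also have "\<dots> = d a" using aA A by simp
    finally show "d a * ipL2 M (e a) ?T = d a * d a" by simp
  qed
  finally show ?thesis by (simp add: power2_eq_square)
qed

lemma L2_series:
  assumes e: "\<And>a. inL2 M (e a)"
    and orth: "\<And>a b. ipL2 M (e a) (e b) = (if a = b then 1 else 0)"
    and sc: "summable (\<lambda>a. (c a)\<^sup>2)"
    and pw: "\<And>x. x \<in> space M \<Longrightarrow> (\<lambda>a. c a * e a x) sums g x"
  shows "inL2 M g" "(\<lambda>N. normL2 M (\<lambda>x. g x - (\<Sum>a<N. c a * e a x))) \<longlonglongrightarrow> 0"
proof -
  define S where "S N x = (\<Sum>a<N. c a * e a x)" for N x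
  have SL2: "inL2 M (S N)" for N
    unfolding S_def using e by (intro inL2_sum) auto
  have Smeas[measurable]: "S N \<in> borel_measurable M" for N
    using SL2 unfolding inL2_def by auto
  have Slim: "(\<lambda>N. S N x) \<longlonglongrightarrow> g x" if "x \<in> space M" for x
    using pw[OF that] unfolding sums_def S_def .
  have gmeas[measurable]: "g \<in> borel_measurable M"
    by (rule borel_measurable_LIMSEQ_real[OF Slim Smeas])
  define T where "T N = (\<Sum>a. (c (a + N))\<^sup>2)" for N
  have T_nonneg: "T N \<ge> 0" for N
    unfolding T_def by (intro suminf_nonneg summable_ignore_initial_segment sc) auto
  have T0: "T \<longlonglongrightarrow> 0"
  proof -
    have Teq: "T N = (\<Sum>a. (c a)\<^sup>2) - (\<Sum>a<N. (c a)\<^sup>2)" for N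
      unfolding T_def by (rule suminf_minus_initial_segment[OF sc])
    have "(\<lambda>N. (\<Sum>a. (c a)\<^sup>2) - (\<Sum>a<N. (c a)\<^sup>2)) \<longlonglongrightarrow> (\<Sum>a. (c a)\<^sup>2) - (\<Sum>a. (c a)\<^sup>2)"
      by (intro tendsto_diff tendsto_const summable_LIMSEQ sc)
    moreover have "T = (\<lambda>N. (\<Sum>a. (c a)\<^sup>2) - (\<Sum>a<N. (c a)\<^sup>2))" by (rule ext) (rule Teq)
    ultimately show ?thesis by simp
  qed
  have bound: "(\<integral>x. (S m x - S N x)\<^sup>2 \<partial>M) \<le> T N" and
       bint: "integrable M (\<lambda>x. (S m x - S N x)\<^sup>2)" if "N \<le> m" for m N
  proof -
    have eq: "S m x - S N x = (\<Sum>a\<in>{N..<m}. c a * e a x)" for x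
      unfolding S_def lessThan_atLeast0 by (rule sum_diff_nat_ivl) (use that in auto)
    have "(\<integral>x. (S m x - S N x)\<^sup>2 \<partial>M) = ipL2 M (\<lambda>x. \<Sum>a\<in>{N..<m}. c a * e a x) (\<lambda>x. \<Sum>a\<in>{N..<m}. c a * e a x)"
      unfolding ipL2_def eq by (simp add: power2_eq_square)
    also have "\<dots> = (\<Sum>a\<in>{N..<m}. (c a)\<^sup>2)"
      by (rule ip_orth_sum[OF e orth]) simp
    also have "\<dots> = (\<Sum>a<m-N. (c (a + N))\<^sup>2)"
    proof -
      have "{N..<m} = {0+N..<(m-N)+N}" using that by simp
      then have "(\<Sum>a\<in>{N..<m}. (c a)\<^sup>2) = (\<Sum>a\<in>{0..<m-N}. (c (a + N))\<^sup>2)"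
        by (simp only: sum.shift_bounds_nat_ivl)
      then show ?thesis by (simp add: lessThan_atLeast0)
    qed
    also have "\<dots> \<le> T N"
      unfolding T_def by (intro sum_le_suminf summable_ignore_initial_segment sc) auto
    finally show "(\<integral>x. (S m x - S N x)\<^sup>2 \<partial>M) \<le> T N" .
    show "integrable M (\<lambda>x. (S m x - S N x)\<^sup>2)"
      using inL2_diff[OF SL2 SL2] unfolding inL2_def by auto
  qed
  have fatou: "(\<integral>\<^sup>+x. ennreal ((g x - S N x)\<^sup>2) \<partial>M) \<le> ennreal (T N)" for N
  proof -
    have "(\<integral>\<^sup>+x. ennreal ((g x - S N x)\<^sup>2) \<partial>M) = (\<integral>\<^sup>+x. liminf (\<lambda>m. ennreal ((S m x - S N x)\<^sup>2)) \<partial>M)"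
    proof (rule nn_integral_cong)
      fix x assume x: "x \<in> space M"
      have "(\<lambda>m. ennreal ((S m x - S N x)\<^sup>2)) \<longlonglongrightarrow> ennreal ((g x - S N x)\<^sup>2)"
        by (rule tendsto_ennrealI) (intro tendsto_intros Slim[OF x])
      from lim_imp_Liminf[OF _ this]
      show "ennreal ((g x - S N x)\<^sup>2) = liminf (\<lambda>m. ennreal ((S m x - S N x)\<^sup>2))"
        by simp
    qed
    also have "\<dots> \<le> liminf (\<lambda>m. \<integral>\<^sup>+x. ennreal ((S m x - S N x)\<^sup>2) \<partial>M)"
      by (rule nn_integral_liminf) measurable
    also have "\<dots> \<le> liminf (\<lambda>m. ennreal (T N))"
    proof (rule Liminf_mono)
      show "\<forall>\<^sub>F m in sequentially. (\<integral>\<^sup>+x. ennreal ((S m x - S N x)\<^sup>2) \<partial>M) \<le> ennreal (T N)"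
      proof (rule eventually_sequentiallyI[of N])
        fix m assume "N \<le> m"
        have "(\<integral>\<^sup>+x. ennreal ((S m x - S N x)\<^sup>2) \<partial>M) = ennreal (\<integral>x. (S m x - S N x)\<^sup>2 \<partial>M)"
          by (rule nn_integral_eq_integral[OF bint[OF \<open>N \<le> m\<close>]]) auto
        also have "\<dots> \<le> ennreal (T N)" by (rule ennreal_leI[OF bound[OF \<open>N \<le> m\<close>]])
        finally show "(\<integral>\<^sup>+x. ennreal ((S m x - S N x)\<^sup>2) \<partial>M) \<le> ennreal (T N)" .
      qed
    qed
    also have "\<dots> = ennreal (T N)" by (simp add: Liminf_const)
    finally show ?thesis .
  qed
  have gint: "integrable M (\<lambda>x. (g x - S N x)\<^sup>2)" for N
  proof (rule integrableI_nonneg)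
    show "(\<lambda>x. (g x - S N x)\<^sup>2) \<in> borel_measurable M" by measurable
    show "AE x in M. 0 \<le> (g x - S N x)\<^sup>2" by auto
    show "(\<integral>\<^sup>+x. ennreal ((g x - S N x)\<^sup>2) \<partial>M) < \<infinity>"
      using fatou[of N] by (simp add: le_less_trans)
  qed
  have gbound: "(\<integral>x. (g x - S N x)\<^sup>2 \<partial>M) \<le> T N" for N
  proof -
    have "ennreal (\<integral>x. (g x - S N x)\<^sup>2 \<partial>M) = (\<integral>\<^sup>+x. ennreal ((g x - S N x)\<^sup>2) \<partial>M)"
      by (rule nn_integral_eq_integral[OF gint, symmetric]) auto
    also have "\<dots> \<le> ennreal (T N)" by (rule fatou)
    finally show ?thesis using T_nonneg[of N] by (simp add: ennreal_le_iff)
  qed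
  show "inL2 M g"
    using gint[of 0] unfolding inL2_def S_def by simp
  show "(\<lambda>N. normL2 M (\<lambda>x. g x - (\<Sum>a<N. c a * e a x))) \<longlonglongrightarrow> 0"
  proof (rule Lim_null_comparison)
    show "\<forall>\<^sub>F N in sequentially. norm (normL2 M (\<lambda>x. g x - (\<Sum>a<N. c a * e a x))) \<le> sqrt (T N)"
    proof (intro always_eventually allI)
      fix N
      have "normL2 M (\<lambda>x. g x - (\<Sum>a<N. c a * e a x)) = sqrt (\<integral>x. (g x - S N x)\<^sup>2 \<partial>M)"
        unfolding normL2_def ipL2_def S_def by (simp add: power2_eq_square)
      also have "\<dots> \<le> sqrt (T N)" by (rule real_sqrt_le_mono[OF gbound])
      finally show "norm (normL2 M (\<lambda>x. g x - (\<Sum>a<N. c a * e a x))) \<le> sqrt (T N)"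
        using normL2_nonneg[of M "\<lambda>x. g x - (\<Sum>a<N. c a * e a x)"] by simp
    qed
    show "(\<lambda>N. sqrt (T N)) \<longlonglongrightarrow> 0"
      using tendsto_real_sqrt[OF T0] by simp
  qed
qed

lemma L2_series_ip:
  assumes e: "\<And>a. inL2 M (e a)"
    and orth: "\<And>a b. ipL2 M (e a) (e b) = (if a = b then 1 else 0)"
    and sc: "summable (\<lambda>a. (c a)\<^sup>2)"
    and pw: "\<And>x. x \<in> space M \<Longrightarrow> (\<lambda>a. c a * e a x) sums g x"
    and w: "inL2 M w"
  shows "(\<lambda>a. c a * ipL2 M w (e a)) sums ipL2 M g w"
proof -
  define S where "S N x = (\<Sum>a<N. c a * e a x)" for N x
  have SL2: "inL2 M (S N)" for N
    unfolding S_def using e by (intro inL2_sum) auto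
  have "(\<lambda>N. ipL2 M (S N) w) \<longlonglongrightarrow> ipL2 M g w"
  proof (rule ip_tendsto[OF L2_series(1)[OF e orth sc pw] SL2 _ w])
    show "(\<lambda>N. normL2 M (\<lambda>x. g x - S N x)) \<longlonglongrightarrow> 0"
      unfolding S_def by (rule L2_series(2)[OF e orth sc pw])
  qed
  moreover have "ipL2 M (S N) w = (\<Sum>a<N. c a * ipL2 M w (e a))" for N
  proof -
    have "ipL2 M (S N) w = (\<Sum>a<N. c a * ipL2 M (e a) w)"
      unfolding S_def using e w by (intro ip_sum) auto
    then show ?thesis by (simp add: ip_comm)
  qed
  ultimately show ?thesis unfolding sums_def by simp
qed

lemma L2_series_coef:
  assumes e: "\<And>a. inL2 M (e a)"
    and orth: "\<And>a b. ipL2 M (e a) (e b) = (if a = b then 1 else 0)"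
    and sc: "summable (\<lambda>a. (c a)\<^sup>2)"
    and pw: "\<And>x. x \<in> space M \<Longrightarrow> (\<lambda>a. c a * e a x) sums g x"
  shows "ipL2 M g (e b) = c b"
proof -
  have "(\<lambda>a. c a * ipL2 M (e b) (e a)) sums ipL2 M g (e b)"
    by (rule L2_series_ip[OF e orth sc pw e])
  moreover have "(\<lambda>a. c a * ipL2 M (e b) (e a)) = (\<lambda>a. if a = b then c a else 0)"
    by (auto simp: orth)
  ultimately have "(\<lambda>a. if a = b then c a else 0) sums ipL2 M g (e b)" by simp
  then show ?thesis using sums_single[of b c] sums_unique2 by blast
qed

lemma L2_series_norm:
  assumes e: "\<And>a. inL2 M (e a)"
    and orth: "\<And>a b. ipL2 M (e a) (e b) = (if a = b then 1 else 0)"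
    and sc: "summable (\<lambda>a. (c a)\<^sup>2)"
    and pw: "\<And>x. x \<in> space M \<Longrightarrow> (\<lambda>a. c a * e a x) sums g x"
  shows "(\<lambda>a. (c a)\<^sup>2) sums (normL2 M g)\<^sup>2"
proof -
  have "(\<lambda>a. c a * ipL2 M g (e a)) sums ipL2 M g g"
    by (rule L2_series_ip[OF e orth sc pw L2_series(1)[OF e orth sc pw]])
  then show ?thesis
    using L2_series_coef[OF e orth sc pw] by (simp add: normL2_sq[symmetric] power2_eq_square)
qed

lemma parseval:
  assumes hb: "hilbert_basis M e" and u: "inL2 M u" and w: "inL2 M w"
  shows "(\<lambda>a. ipL2 M u (e a) * ipL2 M w (e a)) sums ipL2 M u w"
proof -
  have e: "\<And>a. inL2 M (e a)" using hb unfolding hilbert_basis_def by auto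
  define S where "S N x = (\<Sum>a<N. ipL2 M u (e a) * e a x)" for N x
  have SL2: "inL2 M (S N)" for N
    unfolding S_def using e by (intro inL2_sum) auto
  have lim: "(\<lambda>N. normL2 M (\<lambda>x. u x - S N x)) \<longlonglongrightarrow> 0"
    using hb u unfolding hilbert_basis_def S_def by auto
  have "(\<lambda>N. ipL2 M (S N) w) \<longlonglongrightarrow> ipL2 M u w"
    by (rule ip_tendsto[OF u SL2 lim w])
  moreover have "ipL2 M (S N) w = (\<Sum>a<N. ipL2 M u (e a) * ipL2 M w (e a))" for N
  proof -
    have "ipL2 M (S N) w = (\<Sum>a<N. ipL2 M u (e a) * ipL2 M (e a) w)"
      unfolding S_def using e w by (intro ip_sum) auto
    then show ?thesis by (simp add: ip_comm)
  qed
  ultimately show ?thesis unfolding sums_def by simp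
qed

lemma L2_zero_AE:
  assumes "inL2 M f" "normL2 M f = 0"
  shows "AE x in M. f x = 0"
proof -
  have i: "integrable M (\<lambda>x. (f x)\<^sup>2)" using assms unfolding inL2_def by auto
  have "(\<integral>x. (f x)\<^sup>2 \<partial>M) = 0"
    using assms(2) ip_self_nonneg[of M f] unfolding normL2_def ipL2_def by (simp add: power2_eq_square)
  then have "AE x in M. (f x)\<^sup>2 = 0"
    using integral_nonneg_eq_0_iff_AE[OF i] by auto
  then show ?thesis by auto
qed



lemma bw_s_pos: "nd > 0 \<Longrightarrow> bw_s nu nd > 0"
  unfolding bw_s_def by simp

lemma bw_hat_s_pos: assumes "nd > 0" shows "bw_hat_s nu nd > 0"
proof -
  have "(real nd - 1) / real nd \<ge> 0" using assms by simp
  then have "(bw_s nu nd)\<^sup>2 + (real nd - 1) / real nd > 0"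
    using bw_s_pos[OF assms, of nu] by (simp add: add_pos_nonneg)
  then show ?thesis unfolding bw_hat_s_def using bw_s_pos[OF assms, of nu] by simp
qed

lemma pH_pos: fixes eta :: "nat \<Rightarrow> real ^ 'n" assumes "nd > 0" shows "pH nd eta y > 0"
proof -
  have sh: "bw_hat_s CARD('n) nd > 0" using bw_hat_s_pos[OF assms, of "CARD('n)"] .
  have "(\<Sum>j<nd. (sqrt (2 * pi) * bw_hat_s CARD('n) nd) powi (- int CARD('n)) *
         exp (- (1 / (2 * (bw_hat_s CARD('n) nd)\<^sup>2)) * (norm (y - (bw_hat_s CARD('n) nd / bw_s CARD('n) nd) *\<^sub>R eta j))\<^sup>2)) > 0"
    using assms sh by (intro sum_pos) auto
  then show ?thesis unfolding pH_def Let_def using assms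
    by (simp add: )
qed

lemma sq_split1: "(s::real) * s = P \<Longrightarrow> P * (A * B) = (s * A) * (s * B)"
  by (drule sym) (simp add: algebra_simps)

lemma sq_split2: "(s::real) * s = P \<Longrightarrow> s * B = Q \<Longrightarrow> P * (A * B) = A * s * Q"
  by (drule sym, drule sym) (simp add: algebra_simps)

lemma pH_meas[measurable]: "pH nd eta \<in> borel_measurable borel"
  unfolding pH_def Let_def by measurable

theorem proposition2:
  fixes nd :: nat and eta :: "nat \<Rightarrow> real ^ 'n"
    and q :: "nat \<Rightarrow> real ^ 'n \<Rightarrow> real" and lam :: "nat \<Rightarrow> real"
    and rho :: "real \<Rightarrow> real ^ 'n \<Rightarrow> real ^ 'n \<Rightarrow> real"
    and t :: real and c :: real
    and K :: "(real ^ 'n \<Rightarrow> real) \<Rightarrow> (real ^ 'n \<Rightarrow> real)"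
  defines "p \<equiv> pH nd eta"
    and "M \<equiv> muH nd eta"
    and "psi \<equiv> (\<lambda>a y. q a y / sqrt (pH nd eta y))"
    and "k \<equiv> (\<lambda>y x. rho t y x / pH nd eta y)"
    and "b \<equiv> (\<lambda>a. exp (- lam a * t))"
  assumes nd_gt1: "nd > 1"
    and eta_mean: "(1 / real nd) *\<^sub>R (\<Sum>j<nd. eta j) = 0"
    and eta_cov: "\<forall>i j. (1 / (real nd - 1)) * (\<Sum>l<nd. eta l $ i * eta l $ j)
                          = (if i = j then 1 else 0)"
    \<comment> \<open>standing hypotheses on the spectrum of Lhat\<close>
    and lam0: "lam 0 = 0" and lam01: "lam 0 < lam 1" and lam_mono: "mono lam"
    and lam_fin_mult: "\<forall>x. finite {a. lam a = x}"
    and q_reg: "\<forall>a. twice_part_diff (q a)"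
    and q_eig: "\<forall>a y. Lhat nd eta (q a) y = lam a * q a y"
    and q_infty: "\<forall>a. ((\<lambda>y. sqrt (p y) * grad_norm (\<lambda>z. q a z / sqrt (p z)) y)
                         \<longlongrightarrow> 0) at_infinity"
    and q_basis: "hilbert_basis lborel q"
    and q0: "q 0 = (\<lambda>y. sqrt (p y))"
    \<comment> \<open>spectral representation of the transition density\<close>
    and rho_repr: "\<forall>s>0. \<forall>y x. summable (\<lambda>a. exp (- lam a * s) * q a y * q a x) \<and>
                      rho s y x = sqrt (p y) / sqrt (p x) *
                                  (\<Sum>a. exp (- lam a * s) * q a y * q a x)"
    \<comment> \<open>the fixed time t and the operator K_t\<close>
    and t_pos: "t > 0"
    and k_L2: "integrable (M \<Otimes>\<^sub>M M) (\<lambda>(y, x). (k y x)\<^sup>2)"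
    and k_L2_val: "(\<integral>(y, x). (k y x)\<^sup>2 \<partial>(M \<Otimes>\<^sub>M M)) = c\<^sup>2"
    and K_maps: "\<forall>u. inL2 M u \<longrightarrow> inL2 M (K u)"
    and K_linear: "\<forall>u v r s. inL2 M u \<longrightarrow> inL2 M v \<longrightarrow>
                     (AE x in M. K (\<lambda>z. r * u z + s * v z) x = r * K u x + s * K v x)"
    and K_bounded: "\<exists>C. \<forall>u. inL2 M u \<longrightarrow> normL2 M (K u) \<le> C * normL2 M u"
    and K_def: "\<forall>u v. inL2 M u \<longrightarrow> inL2 M v \<longrightarrow>
                  ipL2 M (K u) v = (\<integral>(y, x). k y x * u x * v y \<partial>(M \<Otimes>\<^sub>M M))"
  shows
    \<comment> \<open>(a)\<close>
    "(\<forall>u v. inL2 M u \<longrightarrow> inL2 M v \<longrightarrow>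
        (\<lambda>a. b a * ipL2 M u (psi a) * ipL2 M v (psi a)) sums ipL2 M (K u) v)
     \<and> (\<forall>u v. inL2 M u \<longrightarrow> inL2 M v \<longrightarrow> ipL2 M (K u) v = ipL2 M u (K v))
     \<and> (\<forall>u. inL2 M u \<longrightarrow> ipL2 M (K u) u \<ge> 0)
     \<and> (\<forall>u. inL2 M u \<longrightarrow>
          (\<lambda>N. normL2 M (\<lambda>y. K u y - (\<Sum>a<N. b a * ipL2 M u (psi a) * psi a y)))
            \<longlonglongrightarrow> 0)
     \<comment> \<open>(b)\<close>
     \<and> (\<forall>a. inL2 M (psi a) \<and> b a > 0 \<and> b a = exp (- lam a * t)
              \<and> (AE y in M. K (psi a) y = b a * psi a y))
     \<and> b 0 = 1 \<and> b 0 > b 1 \<and> (\<forall>a\<ge>1. b (Suc a) \<le> b a)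
     \<and> (\<forall>a a'. ipL2 M (K (psi a)) (psi a') = b a * (if a = a' then 1 else 0))
     \<comment> \<open>(c)\<close>
     \<and> (\<forall>u. inL2 M u \<longrightarrow>
          (\<lambda>a. (b a)\<^sup>2 * (ipL2 M u (psi a))\<^sup>2) sums (normL2 M (K u))\<^sup>2)
     \<and> (\<lambda>a. (normL2 M (K (psi a)))\<^sup>2) sums c\<^sup>2
     \<and> (\<lambda>a. (b a)\<^sup>2) sums c\<^sup>2
     \<and> hilbert_schmidt M K"
proof -
  have nd0: "nd > 0" using nd_gt1 by simp
  have ppos: "\<And>y. p y > 0" unfolding p_def using pH_pos[OF nd0] by blast
  have pmeas[measurable]: "p \<in> borel_measurable borel" unfolding p_def by measurable
  have Mdef: "M = density lborel (\<lambda>y. ennreal (p y))" unfolding M_def muH_def p_def ..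
  have spM[simp]: "space M = UNIV" unfolding Mdef by simp
  have setsM[measurable_cong, simp]: "sets M = sets borel" unfolding Mdef by simp
  have measM: "borel_measurable M = borel_measurable borel"
    by (rule measurable_cong_sets) simp_all
  have psi_eq: "psi = (\<lambda>a y. q a y / sqrt (p y))" unfolding psi_def p_def ..
  have qL2: "\<And>a. inL2 lborel (q a)" using q_basis unfolding hilbert_basis_def by auto
  have qmeas[measurable]: "\<And>a. q a \<in> borel_measurable borel"
    using qL2 unfolding inL2_def by auto
  have psimeas[measurable]: "\<And>a. psi a \<in> borel_measurable borel"
    unfolding psi_eq by measurable
  have psi_q: "sqrt (p y) * psi a y = q a y" for a y
    unfolding psi_eq using ppos[of y] by simp
  have sqp: "sqrt (p y) * sqrt (p y) = p y" for y
    using ppos[of y] by simp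
  have intM: "integrable M f \<longleftrightarrow> integrable lborel (\<lambda>x. p x * f x)"
    if [measurable]: "f \<in> borel_measurable borel" for f
    unfolding Mdef by (subst integrable_density) (auto simp: less_imp_le[OF ppos])
  have integralM: "integral\<^sup>L M f = (\<integral>x. p x * f x \<partial>lborel)"
    if [measurable]: "f \<in> borel_measurable borel" for f
    unfolding Mdef by (subst integral_density) (auto simp: less_imp_le[OF ppos])
  have ipM: "ipL2 M f g = (\<integral>x. p x * (f x * g x) \<partial>lborel)"
    if [measurable]: "f \<in> borel_measurable borel" "g \<in> borel_measurable borel" for f g
    unfolding ipL2_def by (rule integralM) measurable
  have psiL2: "inL2 M (psi a)" for a
  proof -
    have "(\<lambda>x. p x * (psi a x)\<^sup>2) = (\<lambda>x. (q a x)\<^sup>2)"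
      unfolding power2_eq_square by (simp only: sq_split1[OF sqp] psi_q)
    then show ?thesis unfolding inL2_def using qL2[of a]
      by (subst intM) (auto simp: inL2_def)
  qed
  have psi_orth: "ipL2 M (psi a) (psi a') = (if a = a' then 1 else 0)" for a a'
  proof -
    have "ipL2 M (psi a) (psi a') = ipL2 lborel (q a) (q a')"
      unfolding ipM[OF psimeas psimeas] unfolding ipL2_def
      by (rule Bochner_Integration.integral_cong[OF refl]) (simp only: sq_split1[OF sqp] psi_q)
    then show ?thesis using q_basis unfolding hilbert_basis_def by auto
  qed
  have psi_basis: "hilbert_basis M psi"
    unfolding hilbert_basis_def
  proof (intro conjI allI impI)
    show "inL2 M (psi a)" for a by (rule psiL2)
    show "ipL2 M (psi a) (psi a') = (if a = a' then 1 else 0)" for a a' by (rule psi_orth)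
    fix u assume u: "inL2 M u"
    have umeas[measurable]: "u \<in> borel_measurable borel" using u unfolding inL2_def measM by simp
    define w where "w = (\<lambda>y. u y * sqrt (p y))"
    have wmeas[measurable]: "w \<in> borel_measurable borel" unfolding w_def by measurable
    have wL2: "inL2 lborel w"
    proof -
      have "integrable M (\<lambda>x. (u x)\<^sup>2)" using u unfolding inL2_def measM by simp
      then have "integrable lborel (\<lambda>x. p x * (u x)\<^sup>2)" by (subst (asm) intM) auto
      moreover have "(\<lambda>x. p x * (u x)\<^sup>2) = (\<lambda>x. (w x)\<^sup>2)"
        unfolding w_def using ppos by (auto simp: power_mult_distrib less_imp_le)
      ultimately show ?thesis unfolding inL2_def by simp
    qed
    have coef: "ipL2 M u (psi a) = ipL2 lborel w (q a)" for a
      unfolding ipM[OF umeas psimeas] unfolding ipL2_def w_def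
      by (rule Bochner_Integration.integral_cong[OF refl]) (rule sq_split2[OF sqp psi_q])
    have eqn: "normL2 M (\<lambda>x. u x - (\<Sum>a<N. ipL2 M u (psi a) * psi a x)) =
               normL2 lborel (\<lambda>x. w x - (\<Sum>a<N. ipL2 lborel w (q a) * q a x))" for N
    proof -
      define D where "D = (\<lambda>x. u x - (\<Sum>a<N. ipL2 M u (psi a) * psi a x))"
      define E where "E = (\<lambda>x. w x - (\<Sum>a<N. ipL2 lborel w (q a) * q a x))"
      have Dm: "D \<in> borel_measurable borel" unfolding D_def by measurable
      have t: "sqrt (p x) * (ipL2 M u (psi a) * psi a x) = ipL2 lborel w (q a) * q a x" for a x
        using psi_q[of x a] coef[of a] by (metis mult.left_commute)
      have DE: "sqrt (p x) * D x = E x" for x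
        unfolding D_def E_def right_diff_distrib sum_distrib_left t
        by (simp add: w_def mult.commute)
      have "ipL2 M D D = (\<integral>x. p x * (D x * D x) \<partial>lborel)" by (rule ipM[OF Dm Dm])
      also have "\<dots> = (\<integral>x. E x * E x \<partial>lborel)"
        by (rule Bochner_Integration.integral_cong[OF refl]) (simp only: sq_split1[OF sqp] DE)
      also have "\<dots> = ipL2 lborel E E" by (simp only: ipL2_def)
      finally show ?thesis unfolding normL2_def D_def E_def by simp
    qed
    show "(\<lambda>N. normL2 M (\<lambda>x. u x - (\<Sum>a<N. ipL2 M u (psi a) * psi a x))) \<longlonglongrightarrow> 0"
      unfolding eqn using q_basis wL2 unfolding hilbert_basis_def by blast
  qed
  have lam_nonneg: "lam a \<ge> 0" for a
    using lam_mono lam0 unfolding mono_def by (metis le0)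
  have b_pos: "b a > 0" for a unfolding b_def by simp
  have b_le1: "b a \<le> 1" for a
    unfolding b_def using lam_nonneg[of a] t_pos by (simp add: mult_nonneg_nonneg)
  have k_sums: "(\<lambda>a. b a * psi a y * psi a x) sums k y x" for y x
  proof -
    have r: "summable (\<lambda>a. exp (- lam a * t) * q a y * q a x)"
      and rr: "rho t y x = sqrt (p y) / sqrt (p x) * (\<Sum>a. exp (- lam a * t) * q a y * q a x)"
      using rho_repr t_pos by auto
    define C where "C = 1 / (sqrt (p y) * sqrt (p x))"
    have "(\<lambda>a. exp (- lam a * t) * q a y * q a x * C) sums ((\<Sum>a. exp (- lam a * t) * q a y * q a x) * C)"
      by (rule sums_mult2[OF summable_sums[OF r]])
    moreover have "(\<lambda>a. exp (- lam a * t) * q a y * q a x * C) = (\<lambda>a. b a * psi a y * psi a x)"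
      unfolding C_def b_def psi_eq by (simp add: fun_eq_iff)
    moreover have "(\<Sum>a. exp (- lam a * t) * q a y * q a x) * C = k y x"
    proof -
      have "k y x = rho t y x / p y" unfolding k_def p_def ..
      also have "\<dots> = sqrt (p y) / sqrt (p x) * (\<Sum>a. exp (- lam a * t) * q a y * q a x) / (sqrt (p y) * sqrt (p y))"
        unfolding rr sqp ..
      also have "\<dots> = (\<Sum>a. exp (- lam a * t) * q a y * q a x) * C"
        unfolding C_def using ppos[of y] ppos[of x] by (simp add: field_simps)
      finally show ?thesis ..
    qed
    ultimately show ?thesis by simp
  qed
  have ksq_sum: "summable (\<lambda>a. (b a * psi a x)\<^sup>2)" for x
  proof -
    have r: "summable (\<lambda>a. exp (- lam a * (2 * t)) * q a x * q a x)"
      using rho_repr t_pos by auto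
    have "summable (\<lambda>a. exp (- lam a * (2 * t)) * q a x * q a x * (1 / p x))"
      by (rule summable_mult2[OF r])
    moreover have "(\<lambda>a. exp (- lam a * (2 * t)) * q a x * q a x * (1 / p x)) = (\<lambda>a. (b a * psi a x)\<^sup>2)"
    proof
      fix a
      have e: "exp (- lam a * (2 * t)) = b a * b a" unfolding b_def by (simp add: exp_add[symmetric])
      show "exp (- lam a * (2 * t)) * q a x * q a x * (1 / p x) = (b a * psi a x)\<^sup>2"
        unfolding e psi_eq power2_eq_square using ppos[of x] sqp[of x]
        by (simp add: field_simps)
    qed
    ultimately show ?thesis by (simp only:)
  qed
  have sfM: "sigma_finite_measure M"
    unfolding Mdef by (subst sigma_finite_measure.sigma_finite_iff_density_finite[OF sigma_finite_lborel]) auto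
  interpret PM: pair_sigma_finite M M using sfM by (simp add: pair_sigma_finite_def)
  have k_suminf: "k y x = (\<Sum>a. b a * psi a y * psi a x)" for y x
    using sums_unique[OF k_sums] .
  have kmeas[measurable]: "(\<lambda>z. k (fst z) (snd z)) \<in> borel_measurable (M \<Otimes>\<^sub>M M)"
    unfolding k_suminf by measurable
  have kx: "(\<lambda>a. (b a * psi a x) * psi a y) sums k y x" for x y
    using k_sums[of y x] by (simp add: ac_simps)
  have Fsum: "(\<lambda>a. (b a * psi a x)\<^sup>2) sums (\<integral>y. (k y x)\<^sup>2 \<partial>M)" for x
  proof -
    have "(\<lambda>a. (b a * psi a x)\<^sup>2) sums (normL2 M (\<lambda>y. k y x))\<^sup>2"
      by (rule L2_series_norm[OF psiL2 psi_orth ksq_sum kx])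
    then show ?thesis unfolding normL2_sq ipL2_def by (simp add: power2_eq_square)
  qed
  have cint: "(\<integral>x. (\<integral>y. (k y x)\<^sup>2 \<partial>M) \<partial>M) = c\<^sup>2"
    using PM.integral_snd[OF k_L2] k_L2_val by simp
  have Fint: "integrable M (\<lambda>x. \<integral>y. (k y x)\<^sup>2 \<partial>M)"
    using PM.integrable_snd[OF k_L2] by simp
  have psi_sq_int: "integrable M (\<lambda>x. (psi a x)\<^sup>2)" for a using psiL2 unfolding inL2_def by simp
  have psi_sq_val: "(\<integral>x. (psi a x)\<^sup>2 \<partial>M) = 1" for a
    using psi_orth[of a a] unfolding ipL2_def by (simp add: power2_eq_square)
  have fa_int: "integrable M (\<lambda>x. (b a * psi a x)\<^sup>2)" for a
    using psi_sq_int[of a] by (simp add: power_mult_distrib)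
  have fa_val: "(\<integral>x. (b a * psi a x)\<^sup>2 \<partial>M) = (b a)\<^sup>2" for a
    using psi_sq_val[of a] by (simp add: power_mult_distrib)
  have bsq_summable: "summable (\<lambda>a. (b a)\<^sup>2)"
  proof (rule summableI_nonneg_bounded)
    show "0 \<le> (b a)\<^sup>2" for a by simp
    fix N
    have "(\<Sum>a<N. (b a)\<^sup>2) = (\<integral>x. (\<Sum>a<N. (b a * psi a x)\<^sup>2) \<partial>M)"
    proof -
      have "(\<integral>x. (\<Sum>a<N. (b a * psi a x)\<^sup>2) \<partial>M) = (\<Sum>a<N. (\<integral>x. (b a * psi a x)\<^sup>2 \<partial>M))"
        by (rule Bochner_Integration.integral_sum) (rule fa_int)
      then show ?thesis using fa_val by simp
    qed
    also have "\<dots> \<le> (\<integral>x. (\<integral>y. (k y x)\<^sup>2 \<partial>M) \<partial>M)"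
    proof (rule integral_mono[OF _ Fint])
      show "integrable M (\<lambda>x. \<Sum>a<N. (b a * psi a x)\<^sup>2)" using fa_int by auto
      fix x
      show "(\<Sum>a<N. (b a * psi a x)\<^sup>2) \<le> (\<integral>y. (k y x)\<^sup>2 \<partial>M)"
        unfolding sums_unique[OF Fsum[of x]]
        by (rule sum_le_suminf[OF sums_summable[OF Fsum[of x]]]) auto
    qed
    finally show "(\<Sum>a<N. (b a)\<^sup>2) \<le> (\<integral>x. (\<integral>y. (k y x)\<^sup>2 \<partial>M) \<partial>M)" .
  qed
  have bsq_sums: "(\<lambda>a. (b a)\<^sup>2) sums c\<^sup>2"
  proof -
    have "(\<lambda>a. integral\<^sup>L M (\<lambda>x. (b a * psi a x)\<^sup>2)) sums (\<integral>x. (\<Sum>a. (b a * psi a x)\<^sup>2) \<partial>M)"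
    proof (rule sums_integral)
      show "integrable M (\<lambda>x. (b a * psi a x)\<^sup>2)" for a by (rule fa_int)
      show "AE x in M. summable (\<lambda>a. norm ((b a * psi a x)\<^sup>2))"
        using ksq_sum by simp
      show "summable (\<lambda>a. \<integral>x. norm ((b a * psi a x)\<^sup>2) \<partial>M)"
        using fa_val bsq_summable by simp
    qed
    moreover have "(\<lambda>x. (\<Sum>a. (b a * psi a x)\<^sup>2)) = (\<lambda>x. \<integral>y. (k y x)\<^sup>2 \<partial>M)"
      using Fsum sums_unique by (metis)
    ultimately show ?thesis using fa_val cint by simp
  qed
  have uvmeas: "u \<in> borel_measurable borel" if "inL2 M u" for u
    using that unfolding inL2_def measM by simp
  have a1: "(\<lambda>a. b a * ipL2 M u (psi a) * ipL2 M v (psi a)) sums ipL2 M (K u) v"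
    if u: "inL2 M u" and v: "inL2 M v" for u v
  proof -
    have umeas[measurable]: "u \<in> borel_measurable borel" using uvmeas[OF u] .
    have vmeas[measurable]: "v \<in> borel_measurable borel" using uvmeas[OF v] .
    have u2: "integrable M (\<lambda>x. (u x)\<^sup>2)" using u unfolding inL2_def by simp
    have v2: "integrable M (\<lambda>x. (v x)\<^sup>2)" using v unfolding inL2_def by simp
    have Pint: "integrable (M \<Otimes>\<^sub>M M) (\<lambda>z. (u (snd z))\<^sup>2 * (v (fst z))\<^sup>2)"
    proof (rule PM.Fubini_integrable)
      show "(\<lambda>z. (u (snd z))\<^sup>2 * (v (fst z))\<^sup>2) \<in> borel_measurable (M \<Otimes>\<^sub>M M)" by measurable
      have "(\<lambda>y. \<integral>x. norm ((u (snd (y, x)))\<^sup>2 * (v (fst (y, x)))\<^sup>2) \<partial>M) = (\<lambda>y. (\<integral>x. (u x)\<^sup>2 \<partial>M) * (v y)\<^sup>2)"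
        by (simp add: abs_mult)
      then show "integrable M (\<lambda>y. \<integral>x. norm ((u (snd (y, x)))\<^sup>2 * (v (fst (y, x)))\<^sup>2) \<partial>M)"
        using v2 by simp
      show "AE y in M. integrable M (\<lambda>x. (u (snd (y, x)))\<^sup>2 * (v (fst (y, x)))\<^sup>2)"
        using u2 by simp
    qed
    have k2: "integrable (M \<Otimes>\<^sub>M M) (\<lambda>z. (k (fst z) (snd z))\<^sup>2)"
      using k_L2 by (simp add: case_prod_beta')
    have hint': "integrable (M \<Otimes>\<^sub>M M) (\<lambda>z. k (fst z) (snd z) * u (snd z) * v (fst z))"
    proof (rule Bochner_Integration.integrable_bound[OF Bochner_Integration.integrable_add[OF k2 Pint]])
      show "(\<lambda>z. k (fst z) (snd z) * u (snd z) * v (fst z)) \<in> borel_measurable (M \<Otimes>\<^sub>M M)" by measurable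
      show "AE z in M \<Otimes>\<^sub>M M. norm (k (fst z) (snd z) * u (snd z) * v (fst z)) \<le>
              norm ((k (fst z) (snd z))\<^sup>2 + (u (snd z))\<^sup>2 * (v (fst z))\<^sup>2)"
      proof (intro AE_I2)
        fix z
        have "\<bar>k (fst z) (snd z) * (u (snd z) * v (fst z))\<bar> \<le> (k (fst z) (snd z))\<^sup>2 + (u (snd z) * v (fst z))\<^sup>2"
          by (rule abs_prod_le)
        then show "norm (k (fst z) (snd z) * u (snd z) * v (fst z)) \<le>
              norm ((k (fst z) (snd z))\<^sup>2 + (u (snd z))\<^sup>2 * (v (fst z))\<^sup>2)"
          by (simp add: power_mult_distrib mult.assoc)
      qed
    qed
    have hint: "integrable (M \<Otimes>\<^sub>M M) (\<lambda>(y, x). k y x * u x * v y)"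
      using hint' by (simp add: case_prod_beta')
    define G where "G x = ipL2 M (\<lambda>y. k y x) v" for x
    have inner: "(\<integral>y. k y x * u x * v y \<partial>M) = G x * u x" for x
    proof -
      have "(\<integral>y. k y x * u x * v y \<partial>M) = (\<integral>y. (k y x * v y) * u x \<partial>M)"
        by (simp add: ac_simps)
      also have "\<dots> = G x * u x" unfolding G_def ipL2_def by (rule integral_mult_left_zero)
      finally show ?thesis .
    qed
    have Gsums: "(\<lambda>a. (b a * ipL2 M v (psi a)) * psi a x) sums G x" for x
    proof -
      have "(\<lambda>a. (b a * psi a x) * ipL2 M v (psi a)) sums G x"
        unfolding G_def by (rule L2_series_ip[OF psiL2 psi_orth ksq_sum kx v])
      then show ?thesis by (simp add: ac_simps)
    qed
    have dsq: "summable (\<lambda>a. (b a * ipL2 M v (psi a))\<^sup>2)"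
    proof (rule summable_comparison_test')
      show "summable (\<lambda>a. ipL2 M v (psi a) * ipL2 M v (psi a))"
        using parseval[OF psi_basis v v] by (rule sums_summable)
      fix a :: nat
      have "(b a)\<^sup>2 \<le> 1" using b_pos[of a] b_le1[of a] by (simp add: power_le_one)
      then have "(b a)\<^sup>2 * (ipL2 M v (psi a))\<^sup>2 \<le> 1 * (ipL2 M v (psi a))\<^sup>2"
        by (rule mult_right_mono) simp
      then show "norm ((b a * ipL2 M v (psi a))\<^sup>2) \<le> ipL2 M v (psi a) * ipL2 M v (psi a)"
        unfolding real_norm_def abs_power2 power_mult_distrib by (simp add: power2_eq_square)
    qed
    have Gip: "(\<lambda>a. (b a * ipL2 M v (psi a)) * ipL2 M u (psi a)) sums ipL2 M G u"
      by (rule L2_series_ip[OF psiL2 psi_orth dsq Gsums u])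
    have "ipL2 M (K u) v = (\<integral>(y, x). k y x * u x * v y \<partial>(M \<Otimes>\<^sub>M M))"
      using K_def u v by blast
    also have "\<dots> = (\<integral>x. (\<integral>y. k y x * u x * v y \<partial>M) \<partial>M)"
      using PM.integral_snd[OF hint] by simp
    also have "\<dots> = ipL2 M G u" unfolding inner ipL2_def ..
    finally have "ipL2 M (K u) v = ipL2 M G u" .
    with Gip show ?thesis by (simp add: ac_simps)
  qed
  have KL2: "inL2 M (K u)" if "inL2 M u" for u using K_maps that by blast
  have Kcoef: "ipL2 M (K u) (psi a) = b a * ipL2 M u (psi a)" if u: "inL2 M u" for u a
  proof -
    have "(\<lambda>c. b c * ipL2 M u (psi c) * ipL2 M (psi a) (psi c)) sums ipL2 M (K u) (psi a)"
      by (rule a1[OF u psiL2])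
    moreover have "(\<lambda>c. b c * ipL2 M u (psi c) * ipL2 M (psi a) (psi c)) = (\<lambda>c. if c = a then b c * ipL2 M u (psi c) else 0)"
      by (auto simp: psi_orth)
    ultimately have "(\<lambda>c. if c = a then b c * ipL2 M u (psi c) else 0) sums ipL2 M (K u) (psi a)" by simp
    then show ?thesis using sums_single[of a "\<lambda>c. b c * ipL2 M u (psi c)"] sums_unique2 by blast
  qed
  have Ksym: "ipL2 M (K u) v = ipL2 M u (K v)" if u: "inL2 M u" and v: "inL2 M v" for u v
  proof -
    have "(\<lambda>a. b a * ipL2 M v (psi a) * ipL2 M u (psi a)) sums ipL2 M (K v) u" by (rule a1[OF v u])
    then have "(\<lambda>a. b a * ipL2 M u (psi a) * ipL2 M v (psi a)) sums ipL2 M u (K v)"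
      by (simp add: ip_comm[of M u] ac_simps)
    then show ?thesis using a1[OF u v] sums_unique2 by blast
  qed
  have Kpos: "ipL2 M (K u) u \<ge> 0" if u: "inL2 M u" for u
  proof -
    have s: "(\<lambda>a. b a * ipL2 M u (psi a) * ipL2 M u (psi a)) sums ipL2 M (K u) u" by (rule a1[OF u u])
    have "0 \<le> b a * ipL2 M u (psi a) * ipL2 M u (psi a)" for a
      using b_pos[of a] by (simp add: mult.assoc)
    then show ?thesis using sums_unique[OF s] by (simp add: suminf_nonneg[OF sums_summable[OF s]])
  qed
  have Kexp: "(\<lambda>N. normL2 M (\<lambda>y. K u y - (\<Sum>a<N. b a * ipL2 M u (psi a) * psi a y))) \<longlonglongrightarrow> 0"
    if u: "inL2 M u" for u
  proof -
    have "(\<lambda>N. normL2 M (\<lambda>y. K u y - (\<Sum>a<N. ipL2 M (K u) (psi a) * psi a y))) \<longlonglongrightarrow> 0"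
      using psi_basis KL2[OF u] unfolding hilbert_basis_def by blast
    then show ?thesis using Kcoef[OF u] by simp
  qed
  have Kpsi_coef: "ipL2 M (K (psi a)) (psi c) = b a * (if a = c then 1 else 0)" for a c
    using Kcoef[OF psiL2, of a c] psi_orth[of a c] by simp
  have Kpsi_AE: "AE y in M. K (psi a) y = b a * psi a y" for a
  proof -
    define D where "D = (\<lambda>y. K (psi a) y - b a * psi a y)"
    have DL2: "inL2 M D" unfolding D_def by (intro inL2_diff inL2_scale KL2 psiL2)
    have lim: "(\<lambda>N. normL2 M (\<lambda>y. K (psi a) y - (\<Sum>c<N. ipL2 M (K (psi a)) (psi c) * psi c y))) \<longlonglongrightarrow> 0"
      using psi_basis KL2[OF psiL2] unfolding hilbert_basis_def by blast
    have ev: "(\<Sum>c<n + Suc a. ipL2 M (K (psi a)) (psi c) * psi c y) = b a * psi a y" for n y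
    proof -
      have "(\<Sum>c<n + Suc a. ipL2 M (K (psi a)) (psi c) * psi c y) = (\<Sum>c<n + Suc a. if c = a then b a * psi a y else 0)"
        unfolding Kpsi_coef by (intro sum.cong) auto
      also have "\<dots> = b a * psi a y" by (simp only: sum.delta finite_lessThan) simp
      finally show ?thesis .
    qed
    have "(\<lambda>n. normL2 M D) \<longlonglongrightarrow> 0"
      using LIMSEQ_ignore_initial_segment[OF lim, of "Suc a"] unfolding ev D_def .
    then have "normL2 M D = 0" by (simp add: LIMSEQ_const_iff)
    from L2_zero_AE[OF DL2 this] show ?thesis unfolding D_def by simp
  qed
  have c1: "(\<lambda>a. (b a)\<^sup>2 * (ipL2 M u (psi a))\<^sup>2) sums (normL2 M (K u))\<^sup>2" if u: "inL2 M u" for u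
  proof -
    have "(\<lambda>a. ipL2 M (K u) (psi a) * ipL2 M (K u) (psi a)) sums ipL2 M (K u) (K u)"
      by (rule parseval[OF psi_basis KL2[OF u] KL2[OF u]])
    then show ?thesis unfolding Kcoef[OF u] normL2_sq by (simp add: power2_eq_square ac_simps)
  qed
  have c2: "(normL2 M (K (psi a)))\<^sup>2 = (b a)\<^sup>2" for a
  proof -
    have "(\<lambda>c. (b c)\<^sup>2 * (ipL2 M (psi a) (psi c))\<^sup>2) sums (normL2 M (K (psi a)))\<^sup>2" by (rule c1[OF psiL2])
    moreover have "(\<lambda>c. (b c)\<^sup>2 * (ipL2 M (psi a) (psi c))\<^sup>2) = (\<lambda>c. if c = a then (b c)\<^sup>2 else 0)"
      by (auto simp: psi_orth)
    ultimately have "(\<lambda>c. if c = a then (b c)\<^sup>2 else 0) sums (normL2 M (K (psi a)))\<^sup>2" by simp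
    then show ?thesis using sums_single[of a "\<lambda>c. (b c)\<^sup>2"] sums_unique2 by metis
  qed
  have c2s: "(\<lambda>a. (normL2 M (K (psi a)))\<^sup>2) sums c\<^sup>2" unfolding c2 by (rule bsq_sums)
  have HS: "hilbert_schmidt M K"
    unfolding hilbert_schmidt_def using K_maps psi_basis sums_summable[OF c2s] by blast
  have bmono: "b (Suc a) \<le> b a" for a
    using lam_mono t_pos unfolding b_def mono_def by (simp add: mult_right_mono)
  have b01: "b 0 = 1" "b 0 > b 1" using lam0 lam01 t_pos unfolding b_def by auto
  have bdef: "\<forall>a. b a = exp (- lam a * t)" unfolding b_def by simp
  show ?thesis
    apply (intro conjI)
    subgoal using a1 by blast
    subgoal using Ksym by blast
    subgoal using Kpos by blast
    subgoal using Kexp by blast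
    subgoal using psiL2 b_pos Kpsi_AE bdef by blast
    subgoal using b01 by simp
    subgoal using b01 by simp
    subgoal using bmono by blast
    subgoal using Kpsi_coef by blast
    subgoal using c1 by blast
    subgoal using c2s by blast
    subgoal using bsq_sums by blast
    subgoal using HS by blast
    done
qed

end
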